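(* Let $0\le r<1$. In the RRH with redirection parameter $r$, for every $N\ge 2$, $$\mathbb{E}[\mathcal{N}_1(N)]=\frac{N}{2-r}-\frac{1}{(2-r)\,\Gamma(r)}\,\frac{\Gamma(N-1+r)}{\Gamma(N)}$$ (for $r=0$ the second term is interpreted as $0$, giving $N/2$).
   Context: The RRH with redirection parameter $r\in[0,1)$ is the following random hypergraph process. At size $N=1$ it has vertex set $\{v_1\}$ and edge set $\{\{v_1\}\}$. Given the hypergraph of size $N$ (vertices $v_1,\dots,v_N$, $N$ edges), choose an existing edge $e$ uniformly at random and add a new vertex $v_{N+1}$ and one new edge, as follows. If $e=\{v_1\}$, the new edge is $\{v_1,v_{N+1}\}$. Otherwise write $e=\{v_{i_1},\dots,v_{i_n}\}$ with $1=i_1<\dots<i_n$, $n\ge2$; independently, with probability $1-r$ the new edge is $e\cup\{v_{N+1}\}$ and with probability $r$ it is $\{v_{i_1},\dots,v_{i_{n-1}},v_{N+1}\}$. The degree of a vertex is the number of edges containing it; $\mathcal{N}_k(N)$ is the number of vertices of degree $k$ at size $N$. *)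

theory Defs
  imports "HOL-Analysis.Analysis" "HOL-Probability.Probability"
begin

text \<open>A hypergraph of size N has vertices 1..N (vertex v_i is the natural number i)
and is represented by its (finite) set of edges; every edge is a set of vertices.\<close>

text \<open>One growth step: the current hypergraph has N vertices and edge set E;
a new vertex N+1 and one new edge are added.  bernoulli_pmf r is True with
probability r (redirection: the largest vertex of e is dropped).\<close>
definition rrh_step :: "real \<Rightarrow> nat \<Rightarrow> nat set set \<Rightarrow> nat set set pmf" where
  "rrh_step r N E =
     do { e \<leftarrow> pmf_of_set E;
          if e = {1} then return_pmf (insert {1, N + 1} E)
          else do { b \<leftarrow> bernoulli_pmf r;
                    return_pmf (insert (if b then insert (N + 1) (e - {Max e})
                                        else insert (N + 1) e) E) } }"

text \<open>rrh_aux r n is the random hypergraph of size n+1.\<close>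
fun rrh_aux :: "real \<Rightarrow> nat \<Rightarrow> nat set set pmf" where
  "rrh_aux r 0 = return_pmf {{1}}"
| "rrh_aux r (Suc n) = bind_pmf (rrh_aux r n) (rrh_step r (Suc n))"

definition RRH :: "real \<Rightarrow> nat \<Rightarrow> nat set set pmf" where
  "RRH r N = rrh_aux r (N - 1)"

definition degree :: "nat set set \<Rightarrow> nat \<Rightarrow> nat" where
  "degree E v = card {e \<in> E. v \<in> e}"

definition Ncount :: "nat \<Rightarrow> nat \<Rightarrow> nat set set \<Rightarrow> nat" where
  "Ncount N k E = card {v \<in> {1..N}. degree E v = k}"

end

theory Submission
  imports Defs
begin

definition Inv :: "nat \<Rightarrow> nat set set \<Rightarrow> bool" where
  "Inv N E \<longleftrightarrow> finite E \<and> (\<forall>e\<in>E. finite e \<and> 1 \<in> e \<and> e \<subseteq> {1..N}) \<and> bij_betw Max E {1..N} \<and> {1} \<in> E"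

lemma Inv_insert:
  assumes I: "Inv N E" and "finite e'" "1 \<in> e'" "e' \<subseteq> {1..Suc N}" "Suc N \<in> e'"
  shows "Inv (Suc N) (insert e' E)"
proof -
  have M: "Max e' = Suc N" using assms by (intro Max_eqI) auto
  have nE: "e' \<notin> E"
  proof
    assume "e' \<in> E"
    then have "e' \<subseteq> {1..N}" using I unfolding Inv_def by auto
    then show False using assms(5) by auto
  qed
  have b: "bij_betw Max E {1..N}" using I unfolding Inv_def by auto
  have "bij_betw Max (insert e' E) (insert (Suc N) {1..N})"
    using b nE M unfolding bij_betw_def by (auto simp: inj_on_insert)
  moreover have "insert (Suc N) {1..N} = {1..Suc N}" by auto
  ultimately show ?thesis using I assms unfolding Inv_def by auto
qed

lemma Max_not1:
  assumes "finite e" "1 \<in> e" "e \<subseteq> {1..N}" "e \<noteq> {1}"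
  shows "Max e \<noteq> 1"
proof -
  obtain x where "x \<in> e" "x \<noteq> 1" using assms by auto
  then have "x > 1" using assms by auto
  moreover have "x \<le> Max e" using assms \<open>x \<in> e\<close> by auto
  ultimately show ?thesis by auto
qed

lemma Inv_step:
  assumes I: "Inv N E" and E': "E' \<in> set_pmf (rrh_step r N E)"
  shows "Inv (Suc N) E'"
proof -
  have fE: "finite E" "E \<noteq> {}" using I unfolding Inv_def by auto
  from E' obtain e where e: "e \<in> E" and
    E'': "E' \<in> set_pmf (if e = {1} then return_pmf (insert {1, N + 1} E)
          else do { b \<leftarrow> bernoulli_pmf r;
                    return_pmf (insert (if b then insert (N + 1) (e - {Max e})
                                        else insert (N + 1) e) E) })"
    unfolding rrh_step_def using fE by auto
  have ep: "finite e" "1 \<in> e" "e \<subseteq> {1..N}" using I e unfolding Inv_def by auto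
  show ?thesis
  proof (cases "e = {1}")
    case True
    then show ?thesis using E'' by (auto intro!: Inv_insert[OF I])
  next
    case False
    have "Max e \<noteq> 1" using Max_not1[OF ep False] .
    then have "1 \<in> e - {Max e}" using ep by auto
    then show ?thesis using E'' False ep
      by (auto intro!: Inv_insert[OF I] split: if_splits)
  qed
qed

lemma Inv_aux: "E \<in> set_pmf (rrh_aux r n) \<Longrightarrow> Inv (Suc n) E"
proof (induction n arbitrary: E)
  case 0
  then show ?case by (auto simp: Inv_def)
next
  case (Suc n)
  then show ?case using Inv_step by fastforce
qed


lemma deg1:
  assumes I: "Inv N E" shows "degree E 1 = N"
proof -
  have "{e \<in> E. 1 \<in> e} = E" using I unfolding Inv_def by auto
  moreover have "card E = N" using I bij_betw_same_card unfolding Inv_def by fastforce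
  ultimately show ?thesis by (simp add: degree_def)
qed

lemma Inv_surj:
  assumes I: "Inv N E" and "v \<in> {1..N}" obtains e where "e \<in> E" "Max e = v" "v \<in> e"
proof -
  have "Max ` E = {1..N}" using I unfolding Inv_def bij_betw_def by auto
  then obtain e where e: "e \<in> E" "Max e = v" using assms(2) by (metis imageE)
  moreover have "finite e" "e \<noteq> {}" using I e unfolding Inv_def by auto
  ultimately show ?thesis using that Max_in by blast
qed

lemma deg_pos:
  assumes I: "Inv N E" and "v \<in> {1..N}" shows "degree E v \<ge> 1"
proof -
  obtain e where "e \<in> E" "v \<in> e" using Inv_surj[OF assms] by blast
  moreover have "finite E" using I unfolding Inv_def by auto
  ultimately have "card {e \<in> E. v \<in> e} > 0" by (auto simp: card_gt_0_iff)
  then show ?thesis by (simp add: degree_def)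
qed

lemma deg_not1:
  assumes I: "Inv N E" and N: "N \<ge> 2" and e: "e \<in> E" and v: "v \<in> e" "v \<noteq> Max e"
  shows "degree E v \<noteq> 1"
proof (cases "v = 1")
  case True
  then show ?thesis using deg1[OF I] N by simp
next
  case False
  have ep: "e \<subseteq> {1..N}" "finite E" using I e unfolding Inv_def by auto
  then have "v \<in> {1..N}" using v by auto
  then obtain e2 where e2: "e2 \<in> E" "Max e2 = v" "v \<in> e2" using Inv_surj[OF I] by blast
  have "e2 \<noteq> e" using e2 v by auto
  then have "{e, e2} \<subseteq> {e \<in> E. v \<in> e}" using e e2 v by auto
  then have "card {e, e2} \<le> card {e \<in> E. v \<in> e}" using ep by (intro card_mono) auto
  then have "degree E v \<ge> 2" using \<open>e2 \<noteq> e\<close> by (simp add: degree_def)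
  then show ?thesis by simp
qed

lemma deg_insert:
  assumes "e' \<notin> E" "finite E"
  shows "degree (insert e' E) v = degree E v + (if v \<in> e' then 1 else 0)"
proof -
  have "{e \<in> insert e' E. v \<in> e} = (if v \<in> e' then insert e' {e \<in> E. v \<in> e} else {e \<in> E. v \<in> e})"
    by auto
  then show ?thesis using assms by (simp add: degree_def)
qed

lemma Ncount_insert:
  assumes I: "Inv N E" and "Suc N \<in> e'" "e' \<subseteq> {1..Suc N}"
  shows "Ncount (Suc N) 1 (insert e' E) = Suc (card {v \<in> {1..N}. degree E v = 1 \<and> v \<notin> e'})"
proof -
  have fE: "finite E" using I unfolding Inv_def by auto
  have nE: "e' \<notin> E"
  proof
    assume "e' \<in> E"
    then have "e' \<subseteq> {1..N}" using I unfolding Inv_def by auto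
    then show False using assms(2) by auto
  qed
  have d0: "degree E (Suc N) = 0"
  proof -
    have "\<forall>e\<in>E. e \<subseteq> {1..N}" using I unfolding Inv_def by auto
    then have "{e \<in> E. Suc N \<in> e} = {}" by fastforce
    then show ?thesis unfolding degree_def by (simp only: card.empty)
  qed
  have "{v \<in> {1..Suc N}. degree (insert e' E) v = 1}
        = insert (Suc N) {v \<in> {1..N}. degree E v = 1 \<and> v \<notin> e'}" (is "?A = ?B")
  proof (intro equalityI subsetI)
    fix v assume v: "v \<in> ?A"
    show "v \<in> ?B"
    proof (cases "v = Suc N")
      case False
      then have v1: "v \<in> {1..N}" using v by auto
      have "degree E v \<ge> 1" using deg_pos[OF I v1] .
      moreover have "degree E v + (if v \<in> e' then 1 else 0) = 1"
        using v deg_insert[OF nE fE, of v] by simp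
      ultimately show ?thesis using v1 by (auto split: if_splits)
    qed simp
  next
    fix v assume "v \<in> ?B"
    then show "v \<in> ?A" using deg_insert[OF nE fE, of v] d0 assms(2) by auto
  qed
  then show ?thesis by (simp add: Ncount_def)
qed


lemma step_exp:
  assumes I: "Inv N E" and N: "N \<ge> 2" and r: "0 \<le> r" "r \<le> 1"
  shows "measure_pmf.expectation (rrh_step r N E) (\<lambda>E. real (Ncount (Suc N) 1 E))
         = 1 + real (Ncount N 1 E) - (1 - r) * real (Ncount N 1 E) / real N"
proof -
  define D where "D = {v \<in> {1..N}. degree E v = 1}"
  have NcD: "Ncount N 1 E = card D" by (simp add: Ncount_def D_def)
  have D1: "1 \<notin> D" using deg1[OF I] N by (auto simp: D_def)
  have DN: "Suc N \<notin> D" by (auto simp: D_def)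
  have fE: "finite E" "E \<noteq> {}" using I unfolding Inv_def by auto
  have fD: "finite D" by (simp add: D_def)
  define K where "K = (\<lambda>e. if e = {1} then return_pmf (insert {1, N + 1} E)
          else do { b \<leftarrow> bernoulli_pmf r;
                    return_pmf (insert (if b then insert (N + 1) (e - {Max e})
                                        else insert (N + 1) e) E) })"
  have stepK: "rrh_step r N E = pmf_of_set E \<bind> K" unfolding rrh_step_def K_def by simp
  have finK: "finite (set_pmf (K e))" for e
    unfolding K_def by (auto intro: finite_subset[of _ UNIV])
  have inner: "measure_pmf.expectation (K e) (\<lambda>E. real (Ncount (Suc N) 1 E))
       = 1 + real (card D) - (1 - r) * (if Max e \<in> D then 1 else 0)" if e: "e \<in> E" for e
  proof -
    have ep: "finite e" "1 \<in> e" "e \<subseteq> {1..N}" using I e unfolding Inv_def by auto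
    show ?thesis
    proof (cases "e = {1}")
      case True
      have "{v \<in> {1..N}. degree E v = 1 \<and> v \<notin> {1, Suc N}} = D" using D1 by (auto simp: D_def)
      then have "Ncount (Suc N) 1 (insert {1, Suc N} E) = Suc (card D)"
        using Ncount_insert[OF I, of "{1, Suc N}"] by simp
      then show ?thesis using True D1 by (simp add: K_def)
    next
      case False
      have KK: "K e = map_pmf (\<lambda>b. insert (if b then insert (N + 1) (e - {Max e})
                                        else insert (N + 1) e) E) (bernoulli_pmf r)"
        using False by (simp add: K_def map_pmf_def)
      have s1: "{v \<in> {1..N}. degree E v = 1 \<and> v \<notin> insert (Suc N) (e - {Max e})} = D"
        using deg_not1[OF I N e] by (auto simp: D_def)
      have me: "Max e \<in> e" using Max_in[OF ep(1)] ep(2) by auto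
      have s2: "{v \<in> {1..N}. degree E v = 1 \<and> v \<notin> insert (Suc N) e} = D - {Max e}"
        using deg_not1[OF I N e] me ep by (auto simp: D_def)
      have c1: "Ncount (Suc N) 1 (insert (insert (Suc N) (e - {Max e})) E) = Suc (card D)"
      proof -
        have "insert (Suc N) (e - {Max e}) \<subseteq> {1..Suc N}" using ep by auto
        from Ncount_insert[OF I _ this] show ?thesis unfolding s1 by simp
      qed
      have c2: "Ncount (Suc N) 1 (insert (insert (Suc N) e) E) = Suc (card (D - {Max e}))"
      proof -
        have "insert (Suc N) e \<subseteq> {1..Suc N}" using ep by auto
        from Ncount_insert[OF I _ this] show ?thesis unfolding s2 by simp
      qed
      have c3: "real (card (D - {Max e})) = real (card D) - (if Max e \<in> D then 1 else 0)"
      proof (cases "Max e \<in> D")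
        case True
        then have "card D \<ge> 1" using fD by (metis One_nat_def Suc_leI card_gt_0_iff empty_iff)
        then show ?thesis using True fD by (simp add: card_Diff_singleton of_nat_diff)
      qed simp
      have "measure_pmf.expectation (K e) (\<lambda>E. real (Ncount (Suc N) 1 E))
          = real (Suc (card D)) * r + real (Suc (card (D - {Max e}))) * (1 - r)"
        unfolding KK integral_map_pmf integral_bernoulli_pmf[OF r] using c1 c2 by simp
      then show ?thesis by (simp only: of_nat_Suc c3) (simp add: algebra_simps)
    qed
  qed
  have "measure_pmf.expectation (rrh_step r N E) (\<lambda>E. real (Ncount (Suc N) 1 E))
     = (\<Sum>e\<in>E. measure_pmf.expectation (K e) (\<lambda>E. real (Ncount (Suc N) 1 E)) /\<^sub>R real (card E))"
    unfolding stepK using fE finK by (intro pmf_expectation_bind_pmf_of_set) auto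
  also have "\<dots> = (\<Sum>e\<in>E. (1 + real (card D) - (1 - r) * (if Max e \<in> D then 1 else 0)) / real N)"
  proof -
    have "card E = N" using I bij_betw_same_card unfolding Inv_def by fastforce
    then show ?thesis using inner by (intro sum.cong) (auto simp: divide_inverse)
  qed
  also have "\<dots> = (real N * (1 + real (card D)) - (1 - r) * real (card {e \<in> E. Max e \<in> D})) / real N"
  proof -
    have "card E = N" using I bij_betw_same_card unfolding Inv_def by fastforce
    moreover have "(\<Sum>e\<in>E. (if Max e \<in> D then 1 else 0 :: real)) = real (card {e \<in> E. Max e \<in> D})"
      using fE by (simp add: sum.If_cases Int_def)
    ultimately show ?thesis
      by (simp add: sum_divide_distrib[symmetric] sum_subtractf sum.distrib sum_distrib_left[symmetric])
  qed
  also have "card {e \<in> E. Max e \<in> D} = card D"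
  proof -
    have b: "bij_betw Max E {1..N}" using I unfolding Inv_def by auto
    have "Max ` {e \<in> E. Max e \<in> D} = D" using b unfolding bij_betw_def by (auto simp: D_def)
    moreover have "inj_on Max {e \<in> E. Max e \<in> D}" using b unfolding bij_betw_def
      by (auto intro: inj_on_subset)
    ultimately show ?thesis using card_image by fastforce
  qed
  finally show ?thesis using N unfolding NcD by (simp add: field_simps)
qed


lemma exp_bind_bounded:
  fixes f :: "'b \<Rightarrow> real"
  assumes f0: "\<And>y. 0 \<le> f y" and fB: "\<And>y. f y \<le> B"
  shows "measure_pmf.expectation (bind_pmf M K) f
       = measure_pmf.expectation M (\<lambda>x. measure_pmf.expectation (K x) f)"
proof -
  have int: "integrable (measure_pmf p) f" for p
    by (rule measure_pmf.integrable_const_bound[where B=B]) (use f0 fB in auto)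
  have i0: "0 \<le> measure_pmf.expectation p f" for p by (rule integral_nonneg_AE) (use f0 in auto)
  have iB: "measure_pmf.expectation p f \<le> B" for p
    by (rule measure_pmf.integral_le_const) (use int fB in auto)
  have int2: "integrable (measure_pmf M) (\<lambda>x. measure_pmf.expectation (K x) f)"
    by (rule measure_pmf.integrable_const_bound[where B=B]) (use i0 iB in auto)
  have "ennreal (measure_pmf.expectation (bind_pmf M K) f) = (\<integral>\<^sup>+y. ennreal (f y) \<partial>bind_pmf M K)"
    by (rule nn_integral_eq_integral[symmetric]) (use int f0 in auto)
  also have "\<dots> = (\<integral>\<^sup>+x. \<integral>\<^sup>+y. ennreal (f y) \<partial>K x \<partial>M)" by simp
  also have "\<dots> = (\<integral>\<^sup>+x. ennreal (measure_pmf.expectation (K x) f) \<partial>M)"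
    by (intro nn_integral_cong nn_integral_eq_integral) (use int f0 in auto)
  also have "\<dots> = ennreal (measure_pmf.expectation M (\<lambda>x. measure_pmf.expectation (K x) f))"
    by (rule nn_integral_eq_integral) (use int2 i0 in auto)
  finally show ?thesis
    by (subst (asm) ennreal_inj) (auto intro!: integral_nonneg_AE i0 f0)
qed

lemma Ncount_le: "Ncount N k E \<le> N"
proof -
  have "card {v \<in> {1..N}. degree E v = k} \<le> card {1..N}" by (intro card_mono) auto
  then show ?thesis by (simp add: Ncount_def)
qed

definition aa :: "real \<Rightarrow> nat \<Rightarrow> real" where
  "aa r n = measure_pmf.expectation (rrh_aux r n) (\<lambda>E. real (Ncount (Suc n) 1 E))"

lemma aa_rec:
  assumes r: "0 \<le> r" "r \<le> 1" and n: "n \<ge> 1"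
  shows "aa r (Suc n) = 1 + (1 - (1 - r) / real (Suc n)) * aa r n"
proof -
  let ?f = "\<lambda>E. real (Ncount (Suc n) 1 E)"
  have bnd: "real (Ncount (Suc n) 1 E) \<le> real (Suc n)" for E
    using Ncount_le by (simp only: of_nat_le_iff)
  have int: "integrable (measure_pmf (rrh_aux r n)) ?f"
    by (rule measure_pmf.integrable_const_bound[where B="real (Suc n)"]) (use bnd in \<open>auto intro!: AE_I2\<close>)
  have "aa r (Suc n) = measure_pmf.expectation (rrh_aux r n)
          (\<lambda>E. measure_pmf.expectation (rrh_step r (Suc n) E) (\<lambda>E. real (Ncount (Suc (Suc n)) 1 E)))"
    unfolding aa_def rrh_aux.simps
    by (rule exp_bind_bounded[where B="real (Suc (Suc n))"]) (use Ncount_le in \<open>simp_all only: of_nat_le_iff of_nat_0_le_iff\<close>)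
  also have "\<dots> = measure_pmf.expectation (rrh_aux r n) (\<lambda>E. 1 + (1 - (1 - r) / real (Suc n)) * ?f E)"
  proof (rule integral_cong_AE)
    show "AE x in measure_pmf (rrh_aux r n).
       measure_pmf.expectation (rrh_step r (Suc n) x) (\<lambda>E. real (Ncount (Suc (Suc n)) 1 E)) =
       1 + (1 - (1 - r) / real (Suc n)) * ?f x"
    proof (rule AE_pmfI)
      fix E assume "E \<in> set_pmf (rrh_aux r n)"
      then have I: "Inv (Suc n) E" by (rule Inv_aux)
      show "measure_pmf.expectation (rrh_step r (Suc n) E) (\<lambda>E. real (Ncount (Suc (Suc n)) 1 E)) =
       1 + (1 - (1 - r) / real (Suc n)) * ?f E"
        using step_exp[OF I _ r] n by (simp add: algebra_simps diff_divide_distrib)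
    qed
  qed auto
  also have "\<dots> = 1 + (1 - (1 - r) / real (Suc n)) * aa r n"
    unfolding aa_def using int by (simp add: prob_space.prob_space measure_pmf.prob_space_axioms)
  finally show ?thesis .
qed

lemma aa_1: "aa r 1 = 1"
proof -
  have I: "Inv 1 {{1}}" by (auto simp: Inv_def)
  have "rrh_aux r 1 = return_pmf (insert {1, 2} {{1}})"
    by (simp add: rrh_step_def pmf_of_set_singleton bind_return_pmf numeral_2_eq_2)
  moreover have "Ncount (Suc 1) 1 (insert {1, Suc 1} {{1}}) = Suc (card {v \<in> {1..1}. degree {{1}} v = 1 \<and> v \<notin> {1, Suc 1}})"
    by (rule Ncount_insert[OF I]) auto
  moreover have "{v \<in> {1..1::nat}. degree {{1}} v = 1 \<and> v \<notin> {1, Suc 1}} = {}" by auto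
  ultimately show ?thesis unfolding aa_def by (simp add: numeral_2_eq_2)
qed


lemma alg1: fixes M c Gx GM r :: real
  assumes "M > 0" "GM \<noteq> 0" "r < 2"
  shows "(M+1)/(2-r) - c*((M - 1 + r)*Gx/(M*GM)) = 1 + (1-(1-r)/M)*(M/(2-r) - c*(Gx/GM))"
proof -
  have "2 - r \<noteq> 0" using assms by simp
  then show ?thesis using assms by (simp add: field_simps)
qed

lemma alg2: fixes G r :: real assumes "G \<noteq> 0" "r < 1"
  shows "2/(2-r) - 1/((2-r)*G) * ((r*G)/1) = 1"
proof -
  have d: "2 - r \<noteq> 0" using assms by simp
  have "1/((2-r)*G) * ((r*G)/1) = r/(2-r)" using assms d by (simp add: field_simps)
  moreover have "2/(2-r) - r/(2-r) = 1" using d by (simp add: diff_divide_distrib[symmetric])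
  ultimately show ?thesis by simp
qed

definition FF :: "real \<Rightarrow> nat \<Rightarrow> real" where
  "FF r N = real N / (2 - r)
         - (if r = 0 then 0
            else 1 / ((2 - r) * Gamma r) * (Gamma (real N - 1 + r) / Gamma (real N)))"

lemma Gamma_pos_plus1: "(x::real) > 0 \<Longrightarrow> Gamma (x + 1) = x * Gamma x"
  by (rule Gamma_plus1) (auto dest: nonpos_Ints_nonpos)

lemma FF_2: assumes "0 \<le> r" "r < 1" shows "FF r 2 = 1"
proof (cases "r = 0")
  case True then show ?thesis by (simp add: FF_def)
next
  case False
  then have rp: "r > 0" using assms by auto
  have g1: "Gamma (real 2 - 1 + r) = r * Gamma r" using Gamma_pos_plus1[OF rp] by (simp add: add.commute)
  have g2: "Gamma (real 2) = 1" using Gamma_fact[of 1] by simp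
  have "Gamma r > 0" using rp by simp
  then have "Gamma r \<noteq> 0" by simp
  from alg2[OF this assms(2)] show ?thesis using False unfolding FF_def g1 g2 by simp
qed

lemma FF_rec:
  assumes "0 \<le> r" "r < 1" "n \<ge> 1"
  shows "FF r (Suc (Suc n)) = 1 + (1 - (1 - r) / real (Suc n)) * FF r (Suc n)"
proof (cases "r = 0")
  case True then show ?thesis by (simp add: FF_def field_simps)
next
  case False
  then have rp: "r > 0" using assms by auto
  define M where "M = real (Suc n)"
  have Mp: "M > 0" by (simp add: M_def)
  define x where "x = M - 1 + r"
  have xp: "x > 0" using rp assms(3) by (simp add: x_def M_def)
  have g1: "Gamma (real (Suc (Suc n)) - 1 + r) = x * Gamma x"
    using Gamma_pos_plus1[OF xp] by (simp add: x_def M_def algebra_simps)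
  have g2: "Gamma (real (Suc (Suc n))) = M * Gamma M"
    using Gamma_pos_plus1[OF Mp] by (simp add: M_def add.commute)
  have g3: "Gamma (real (Suc n) - 1 + r) = Gamma x" by (simp add: x_def M_def)
  have "Gamma r > 0" "Gamma M > 0" using rp Mp by auto
  moreover have "2 - r > 0" using assms by simp
  moreover have "real (Suc (Suc n)) = M + 1" by (simp add: M_def)
  have GM: "Gamma M \<noteq> 0" using Gamma_real_pos[OF Mp] by linarith
  ultimately have "Gamma M \<noteq> 0" "r < 2" "real (Suc (Suc n)) = M + 1" using GM by (auto simp: M_def)
  from alg1[OF Mp this(1,2), of "1 / ((2 - r) * Gamma r)" "Gamma x"] show ?thesis using False
    unfolding FF_def g1 g2 g3 M_def[symmetric] x_def \<open>real (Suc (Suc n)) = M + 1\<close>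
    using g1 g2 by (simp add: M_def x_def)
qed

lemma aa_FF: assumes "0 \<le> r" "r < 1" "n \<ge> 1" shows "aa r n = FF r (Suc n)"
  using assms(3)
proof (induction n rule: dec_induct)
  case base
  then show ?case using aa_1 FF_2[OF assms(1,2)] by (simp add: numeral_2_eq_2)
next
  case (step n)
  then show ?case using aa_rec[of r n] FF_rec[of r n] assms by simp
qed

theorem mainTheorem13:
  fixes r :: real and N :: nat
  assumes "0 \<le> r" and "r < 1" and "N \<ge> 2"
  shows "measure_pmf.expectation (RRH r N) (\<lambda>E. real (Ncount N 1 E)) =
         real N / (2 - r)
         - (if r = 0 then 0
            else 1 / ((2 - r) * Gamma r) * (Gamma (real N - 1 + r) / Gamma (real N)))"
proof -
  obtain n where N: "N = Suc n" and n: "n \<ge> 1" using assms(3) by (metis Suc_le_D Suc_1 Suc_le_mono)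
  have "measure_pmf.expectation (RRH r N) (\<lambda>E. real (Ncount N 1 E)) = aa r n"
    by (simp add: RRH_def aa_def N)
  also have "\<dots> = FF r N" using aa_FF[OF assms(1,2) n] N by simp
  finally show ?thesis by (simp add: FF_def)
qed

end
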